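(* Let $K\in\mathcal M(L^0(\mathcal G)\times\mathcal P^q)$. For $(Y^*,Q^* )\in L^0(\mathcal G)\times\mathcal P^q$ let $\mathcal A(Y^*,Q^* )=\{\xi\in L^p_{\mathcal G}(\mathcal F):E[-\xi\tfrac{dQ^*}{d\mathbb P}|\mathcal G]\ge Y^*\}$. Then for every $(Y^*,Q^* )\in L^0(\mathcal G)\times\mathcal P^q$ $$K(Y^*,Q^* )=\operatorname*{ess\,sup}_{Q\in\mathcal P^q}\ \operatorname*{ess\,inf}_{X\in\mathcal A(Y^*,Q^* )}K\Big(E\Big[-X\tfrac{dQ}{d\mathbb P}\Big|\mathcal G\Big],Q\Big).$$
   Context: Let $(\Omega,\mathcal F,\mathbb P)$ be a probability space, $\mathcal G\subseteq\mathcal F$ a sub-$\sigma$-algebra; (in)equalities a.s.; "on $A$" means a.s. on $A$. $L^0(\mathcal G)$: a.s. finite $\mathcal G$-measurable r.v.; $\bar L^0(\mathcal G)$: values in $\mathbb R\cup\{+\infty\}$; $L^0_{++}(\mathcal G)=\{Y>0\}$. Fix $p\in[1,\infty]$, $1/p+1/q=1$. $\|X|\mathcal G\|_p=E[|X|^p|\mathcal G]^{1/p}$ ($p<\infty$, with $E[W|\mathcal G]=\lim_nE[W\wedge n|\mathcal G]$ for $W\ge0$), $\|X|\mathcal G\|_\infty=\operatorname{ess\,inf}\{Y\ \mathcal G\text{-meas.},Y\ge|X|\}$; $L^p_{\mathcal G}(\mathcal F)=\{X:\|X|\mathcal G\|_p<\infty\text{ a.s.}\}=L^0(\mathcal G)\cdot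 L^p(\mathcal F)$ with $E[YW|\mathcal G]:=YE[W|\mathcal G]$; likewise $L^q_{\mathcal G}(\mathcal F)$. $\mathcal P^q=\{Z\in L^q_{\mathcal G}(\mathcal F):Z\ge0,E[Z|\mathcal G]=1\}$, identified with probabilities $Q$, $dQ/d\mathbb P=Z$. The class $\mathcal M(L^0(\mathcal G)\times\mathcal P^q)$ consists of maps $K:L^0(\mathcal G)\times\mathcal P^q\to\bar L^0(\mathcal G)$ such that: (i) $K$ is nondecreasing in the first argument; (ii) $K(Y\mathbf 1_A,Q)\mathbf 1_A=K(Y,Q)\mathbf 1_A$ for all $A\in\mathcal G$, $Y$, $Q$; (iii) $\operatorname{ess\,inf}_{Y\in L^0(\mathcal G)}K(Y,Q)=\operatorname{ess\,inf}_{Y\in L^0(\mathcal G)}K(Y,Q')$ for all $Q,Q'\in\mathcal P^q$; (iv) for every $(Y^*,Q^* )$, $A\in\mathcal G$, $\alpha\in L^0(\mathcal G)$ with $K(Y^*,Q^* )<\alpha$ on $A$, there exists $(S^*,X^* )\in L^0_{++}(\mathcal G)\times L^p_{\mathcal G}(\mathcal F)$ with $Y^*S^*+E[X^*\tfrac{dQ^*}{d\mathbb P}|\mathcal G]<YS^*+E[X^*\tfrac{dQ}{d\mathbb P}|\mathcal G]$ on $A$ for every $(Y,Q)$ with $K(Y,Q)\ge\alpha$ on $A$; (v) for every $X\in L^p_{\mathcal G}(\mathcal F)$ the set $\{K(E[X\tfrac{dQ}{d\mathbb P}|\mathcal G],Q):Q\in\mathcal P^q\}$ is upward directed; (vi)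 $K(Y,Q_1)\mathbf 1_A=K(Y,Q_2)\mathbf 1_A$ whenever $A\in\mathcal G$ and $\tfrac{dQ_1}{d\mathbb P}\mathbf 1_A=\tfrac{dQ_2}{d\mathbb P}\mathbf 1_A$. *)

theory Defs
  imports "HOL-Probability.Probability"
begin

text \<open>Setting: M is the probability space (Omega, F, P) (sets M = F), G is a
measure whose sets form the sub-sigma-algebra (subalgebra M G).  Random
variables are represented by functions; all (in)equalities are almost sure
(AE w.r.t. M).  The generalized conditional expectation E[X|G] is
real_cond_exp M G X = E[X^+|G] - E[X^-|G] built from the nonnegative
conditional expectation nn_cond_exp (which for W >= 0 equals lim E[W /\ n|G]).\<close>

definition is_ess_inf ::
  "'a measure \<Rightarrow> 'a measure \<Rightarrow> 'i set \<Rightarrow> ('i \<Rightarrow> 'a \<Rightarrow> ereal) \<Rightarrow> ('a \<Rightarrow> ereal) \<Rightarrow> bool" where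
  "is_ess_inf M G I f g \<longleftrightarrow>
     g \<in> borel_measurable G \<and>
     (\<forall>i\<in>I. AE \<omega> in M. g \<omega> \<le> f i \<omega>) \<and>
     (\<forall>h\<in>borel_measurable G. (\<forall>i\<in>I. AE \<omega> in M. h \<omega> \<le> f i \<omega>) \<longrightarrow> (AE \<omega> in M. h \<omega> \<le> g \<omega>))"

definition is_ess_sup ::
  "'a measure \<Rightarrow> 'a measure \<Rightarrow> 'i set \<Rightarrow> ('i \<Rightarrow> 'a \<Rightarrow> ereal) \<Rightarrow> ('a \<Rightarrow> ereal) \<Rightarrow> bool" where
  "is_ess_sup M G I f g \<longleftrightarrow>
     g \<in> borel_measurable G \<and>
     (\<forall>i\<in>I. AE \<omega> in M. f i \<omega> \<le> g \<omega>) \<and>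
     (\<forall>h\<in>borel_measurable G. (\<forall>i\<in>I. AE \<omega> in M. f i \<omega> \<le> h \<omega>) \<longrightarrow> (AE \<omega> in M. g \<omega> \<le> h \<omega>))"

definition ess_inf ::
  "'a measure \<Rightarrow> 'a measure \<Rightarrow> 'i set \<Rightarrow> ('i \<Rightarrow> 'a \<Rightarrow> ereal) \<Rightarrow> 'a \<Rightarrow> ereal" where
  "ess_inf M G I f = (SOME g. is_ess_inf M G I f g)"

definition ess_sup ::
  "'a measure \<Rightarrow> 'a measure \<Rightarrow> 'i set \<Rightarrow> ('i \<Rightarrow> 'a \<Rightarrow> ereal) \<Rightarrow> 'a \<Rightarrow> ereal" where
  "ess_sup M G I f = (SOME g. is_ess_sup M G I f g)"

definition L0 :: "'a measure \<Rightarrow> ('a \<Rightarrow> real) set" where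
  "L0 G = borel_measurable G"

definition L0pp :: "'a measure \<Rightarrow> 'a measure \<Rightarrow> ('a \<Rightarrow> real) set" where
  "L0pp M G = {Y \<in> L0 G. AE \<omega> in M. Y \<omega> > 0}"

definition cond_norm :: "'a measure \<Rightarrow> 'a measure \<Rightarrow> ennreal \<Rightarrow> ('a \<Rightarrow> real) \<Rightarrow> 'a \<Rightarrow> ereal" where
  "cond_norm M G p X =
     (if p = \<infinity> then
        ess_inf M G {Y :: 'a \<Rightarrow> ereal. Y \<in> borel_measurable G \<and> (AE \<omega> in M. ereal \<bar>X \<omega>\<bar> \<le> Y \<omega>)} (\<lambda>Y. Y)
      else
        (\<lambda>\<omega>. let e = nn_cond_exp M G (\<lambda>\<omega>. ennreal (\<bar>X \<omega>\<bar> powr enn2real p)) \<omega>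
              in if e = \<infinity> then \<infinity> else ereal (enn2real e powr (1 / enn2real p))))"

definition LpG :: "'a measure \<Rightarrow> 'a measure \<Rightarrow> ennreal \<Rightarrow> ('a \<Rightarrow> real) set" where
  "LpG M G p = {X \<in> borel_measurable M. AE \<omega> in M. cond_norm M G p X \<omega> < \<infinity>}"

definition conj_exp :: "ennreal \<Rightarrow> ennreal" where
  "conj_exp p = (if p = 1 then \<infinity> else if p = \<infinity> then 1 else p / (p - 1))"

text \<open>P^q: densities Z = dQ/dP in L^q_G(F) with Z >= 0 and E[Z|G] = 1.\<close>
definition Pq :: "'a measure \<Rightarrow> 'a measure \<Rightarrow> ennreal \<Rightarrow> ('a \<Rightarrow> real) set" where
  "Pq M G q = {Z \<in> LpG M G q. (AE \<omega> in M. Z \<omega> \<ge> 0) \<and> (AE \<omega> in M. real_cond_exp M G Z \<omega> = 1)}"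

text \<open>K Y Z stands for K(Y, Q) with dQ/dP = Z.
Besides (i)-(vi) we require what is implicit in the paper: K maps into
bar L^0(G) (G-measurable, values in R \<union> {+infinity}) and is well defined on
a.s.-equivalence classes.\<close>
definition class_M ::
  "'a measure \<Rightarrow> 'a measure \<Rightarrow> ennreal \<Rightarrow> (('a \<Rightarrow> real) \<Rightarrow> ('a \<Rightarrow> real) \<Rightarrow> 'a \<Rightarrow> ereal) \<Rightarrow> bool" where
  "class_M M G p K \<longleftrightarrow>
   (let q = conj_exp p in
    \<comment> \<open>values in bar L^0(G)\<close>
    (\<forall>Y\<in>L0 G. \<forall>Z\<in>Pq M G q. K Y Z \<in> borel_measurable G \<and> (AE \<omega> in M. K Y Z \<omega> > -\<infinity>)) \<and>
    \<comment> \<open>well defined on equivalence classes\<close>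
    (\<forall>Y\<in>L0 G. \<forall>Y'\<in>L0 G. \<forall>Z\<in>Pq M G q. \<forall>Z'\<in>Pq M G q.
       (AE \<omega> in M. Y \<omega> = Y' \<omega>) \<longrightarrow> (AE \<omega> in M. Z \<omega> = Z' \<omega>) \<longrightarrow>
       (AE \<omega> in M. K Y Z \<omega> = K Y' Z' \<omega>)) \<and>
    \<comment> \<open>(i) nondecreasing in the first argument\<close>
    (\<forall>Y\<in>L0 G. \<forall>Y'\<in>L0 G. \<forall>Z\<in>Pq M G q.
       (AE \<omega> in M. Y \<omega> \<le> Y' \<omega>) \<longrightarrow> (AE \<omega> in M. K Y Z \<omega> \<le> K Y' Z \<omega>)) \<and>
    \<comment> \<open>(ii) locality in the first argument\<close>
    (\<forall>A\<in>sets G. \<forall>Y\<in>L0 G. \<forall>Z\<in>Pq M G q.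
       AE \<omega> in M. K (\<lambda>x. Y x * indicator A x) Z \<omega> * indicator A \<omega> = K Y Z \<omega> * indicator A \<omega>) \<and>
    \<comment> \<open>(iii)\<close>
    (\<forall>Z\<in>Pq M G q. \<forall>Z'\<in>Pq M G q.
       AE \<omega> in M. ess_inf M G (L0 G) (\<lambda>Y. K Y Z) \<omega> = ess_inf M G (L0 G) (\<lambda>Y. K Y Z') \<omega>) \<and>
    \<comment> \<open>(iv)\<close>
    (\<forall>Ys\<in>L0 G. \<forall>Zs\<in>Pq M G q. \<forall>A\<in>sets G. \<forall>\<alpha>\<in>L0 G.
       (AE \<omega> in M. \<omega> \<in> A \<longrightarrow> K Ys Zs \<omega> < ereal (\<alpha> \<omega>)) \<longrightarrow>
       (\<exists>S\<in>L0pp M G. \<exists>X\<in>LpG M G p.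
          \<forall>Y\<in>L0 G. \<forall>Z\<in>Pq M G q.
            (AE \<omega> in M. \<omega> \<in> A \<longrightarrow> K Y Z \<omega> \<ge> ereal (\<alpha> \<omega>)) \<longrightarrow>
            (AE \<omega> in M. \<omega> \<in> A \<longrightarrow>
               Ys \<omega> * S \<omega> + real_cond_exp M G (\<lambda>x. X x * Zs x) \<omega>
                 < Y \<omega> * S \<omega> + real_cond_exp M G (\<lambda>x. X x * Z x) \<omega>))) \<and>
    \<comment> \<open>(v) upward directedness\<close>
    (\<forall>X\<in>LpG M G p. \<forall>Z1\<in>Pq M G q. \<forall>Z2\<in>Pq M G q. \<exists>Z3\<in>Pq M G q.
       AE \<omega> in M.
         K (real_cond_exp M G (\<lambda>x. X x * Z1 x)) Z1 \<omega> \<le> K (real_cond_exp M G (\<lambda>x. X x * Z3 x)) Z3 \<omega> \<and>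
         K (real_cond_exp M G (\<lambda>x. X x * Z2 x)) Z2 \<omega> \<le> K (real_cond_exp M G (\<lambda>x. X x * Z3 x)) Z3 \<omega>) \<and>
    \<comment> \<open>(vi) locality in the second argument\<close>
    (\<forall>A\<in>sets G. \<forall>Y\<in>L0 G. \<forall>Z1\<in>Pq M G q. \<forall>Z2\<in>Pq M G q.
       (AE \<omega> in M. Z1 \<omega> * indicator A \<omega> = Z2 \<omega> * indicator A \<omega>) \<longrightarrow>
       (AE \<omega> in M. K Y Z1 \<omega> * indicator A \<omega> = K Y Z2 \<omega> * indicator A \<omega>)))"

definition acc_set :: "'a measure \<Rightarrow> 'a measure \<Rightarrow> ennreal \<Rightarrow> ('a \<Rightarrow> real) \<Rightarrow> ('a \<Rightarrow> real) \<Rightarrow> ('a \<Rightarrow> real) set" where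
  "acc_set M G p Ys Zs = {\<xi> \<in> LpG M G p. AE \<omega> in M. real_cond_exp M G (\<lambda>x. - \<xi> x * Zs x) \<omega> \<ge> Ys \<omega>}"

end

theory Submission
  imports Defs
begin

lemma max_countable_measure:
  fixes \<Phi> :: "'i set \<Rightarrow> 'a set"
  assumes fm: "finite_measure M"
    and meas: "\<And>C. countable C \<Longrightarrow> C \<subseteq> I \<Longrightarrow> \<Phi> C \<in> sets M"
    and mono: "\<And>C D. C \<subseteq> D \<Longrightarrow> \<Phi> C \<subseteq> \<Phi> D"
  shows "\<exists>C. countable C \<and> C \<subseteq> I \<and>
     (\<forall>D. countable D \<and> D \<subseteq> I \<longrightarrow> measure M (\<Phi> D) \<le> measure M (\<Phi> C))"
proof -
  interpret finite_measure M by (rule fm)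
  define S where "S = {measure M (\<Phi> C) | C. countable C \<and> C \<subseteq> I}"
  have "measure M (\<Phi> {}) \<in> S" unfolding S_def by blast
  then have Sne: "S \<noteq> {}" by blast
  have Sbdd: "bdd_above S" unfolding S_def bdd_above_def
    by (rule exI[of _ "measure M (space M)"]) (auto intro!: bounded_measure)
  define s where "s = Sup S"
  have "\<forall>n::nat. \<exists>C. countable C \<and> C \<subseteq> I \<and> s - 1/(Suc n) < measure M (\<Phi> C)"
  proof
    fix n :: nat
    have "s - 1/(Suc n) < s" by simp
    then obtain x where "x \<in> S" "s - 1/(Suc n) < x"
      using less_cSup_iff[OF Sne Sbdd] unfolding s_def by blast
    then show "\<exists>C. countable C \<and> C \<subseteq> I \<and> s - 1/(Suc n) < measure M (\<Phi> C)"
      unfolding S_def by auto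
  qed
  then obtain Cn where Cn: "\<And>n. countable (Cn n)" "\<And>n. Cn n \<subseteq> I"
      "\<And>n. s - 1/(Suc n) < measure M (\<Phi> (Cn n))" by metis
  define C where "C = (\<Union>n. Cn n)"
  have cC: "countable C" "C \<subseteq> I" unfolding C_def using Cn by auto
  have ge: "s \<le> measure M (\<Phi> C)"
  proof (rule field_le_epsilon)
    fix e :: real assume "0 < e"
    then obtain n :: nat where "1 / real (Suc n) < e"
      using nat_approx_posE by blast
    have "measure M (\<Phi> (Cn n)) \<le> measure M (\<Phi> C)"
      by (rule finite_measure_mono[OF mono meas[OF cC]]) (auto simp: C_def)
    then show "s \<le> measure M (\<Phi> C) + e" using Cn(3)[of n] \<open>1 / real (Suc n) < e\<close> by linarith
  qed
  show ?thesis
  proof (intro exI conjI allI impI)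
    fix D assume "countable D \<and> D \<subseteq> I"
    then have "measure M (\<Phi> D) \<in> S" unfolding S_def by auto
    then have "measure M (\<Phi> D) \<le> s" unfolding s_def using Sbdd by (rule cSup_upper)
    then show "measure M (\<Phi> D) \<le> measure M (\<Phi> C)" using ge by linarith
  qed (use cC in auto)
qed

lemma ess_inf_countable:
  fixes f :: "'i \<Rightarrow> 'a \<Rightarrow> ereal"
  assumes P: "prob_space M" and sub: "subalgebra M G"
    and fm: "\<And>i. i \<in> I \<Longrightarrow> f i \<in> borel_measurable G"
  shows "\<exists>C. countable C \<and> C \<subseteq> I \<and> is_ess_inf M G I f (\<lambda>\<omega>. INF i\<in>C. f i \<omega>)"
proof -
  interpret prob_space M by (rule P)
  have fmM: "f i \<in> borel_measurable M" if "i \<in> I" for i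
    using measurable_from_subalg[OF sub fm[OF that]] .
  define U where "U = (\<lambda>(r::rat) C. {\<omega> \<in> space M. \<exists>i\<in>C. f i \<omega> < ereal (real_of_rat r)})"
  have Umeas: "U r C \<in> sets M" if "countable C" "C \<subseteq> I" for r C
  proof -
    have "U r C = (\<Union>i\<in>C. {\<omega> \<in> space M. f i \<omega> < ereal (real_of_rat r)})"
      unfolding U_def by auto
    also have "\<dots> \<in> sets M"
      using that fmM by (intro sets.countable_UN') auto
    finally show ?thesis .
  qed
  have Umono: "U r C \<subseteq> U r D" if "C \<subseteq> D" for r C D
    using that unfolding U_def by auto
  have "\<forall>r. \<exists>C. countable C \<and> C \<subseteq> I \<and>
     (\<forall>D. countable D \<and> D \<subseteq> I \<longrightarrow> measure M (U r D) \<le> measure M (U r C))"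
  proof
    fix r show "\<exists>C. countable C \<and> C \<subseteq> I \<and>
     (\<forall>D. countable D \<and> D \<subseteq> I \<longrightarrow> measure M (U r D) \<le> measure M (U r C))"
      by (rule max_countable_measure[OF finite_measure_axioms]) (auto intro: Umeas Umono[THEN subsetD])
  qed
  then obtain Cr where Cr: "\<And>r. countable (Cr r)" "\<And>r. Cr r \<subseteq> I"
    "\<And>r D. countable D \<Longrightarrow> D \<subseteq> I \<Longrightarrow> measure M (U r D) \<le> measure M (U r (Cr r))"
    by metis
  define C where "C = (\<Union>r. Cr r)"
  have cC: "countable C" "C \<subseteq> I" unfolding C_def using Cr by auto
  define g where "g = (\<lambda>\<omega>. INF i\<in>C. f i \<omega>)"
  have gmeas: "g \<in> borel_measurable G"
    unfolding g_def using cC fm by (intro borel_measurable_INF) auto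
  have gM: "g \<in> borel_measurable M" using measurable_from_subalg[OF sub gmeas] .
  have lower: "AE \<omega> in M. g \<omega> \<le> f i \<omega>" if iI: "i \<in> I" for i
  proof -
    define B where "B = (\<lambda>r::rat. {\<omega> \<in> space M. f i \<omega> < ereal (real_of_rat r) \<and> ereal (real_of_rat r) < g \<omega>})"
    have Bnull: "B r \<in> null_sets M" for r
    proof -
      have Bs: "B r \<in> sets M" unfolding B_def using fmM[OF iI] gM by measurable
      define D where "D = insert i (Cr r)"
      have cD: "countable D" "D \<subseteq> I" unfolding D_def using Cr iI by auto
      have disj: "U r (Cr r) \<inter> B r = {}"
      proof (rule ccontr)
        assume "U r (Cr r) \<inter> B r \<noteq> {}"
        then obtain \<omega> j where "j \<in> Cr r" "f j \<omega> < ereal (real_of_rat r)" "ereal (real_of_rat r) < g \<omega>"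
          unfolding U_def B_def by auto
        moreover have "g \<omega> \<le> f j \<omega>" unfolding g_def using \<open>j \<in> Cr r\<close>
          by (intro INF_lower) (auto simp: C_def)
        ultimately show False by auto
      qed
      have sub1: "U r (Cr r) \<union> B r \<subseteq> U r D" unfolding U_def B_def D_def by auto
      have "measure M (U r (Cr r)) + measure M (B r) = measure M (U r (Cr r) \<union> B r)"
        by (rule finite_measure_Union[symmetric]) (use Umeas Cr Bs disj in auto)
      also have "\<dots> \<le> measure M (U r D)"
        by (rule finite_measure_mono[OF sub1 Umeas[OF cD]])
      also have "\<dots> \<le> measure M (U r (Cr r))" by (rule Cr(3)[OF cD])
      finally have "measure M (B r) = 0" using measure_nonneg[of M "B r"] by linarith
      then show ?thesis using Bs by (simp add: emeasure_eq_measure null_setsI)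
    qed
    have "AE \<omega> in M. \<forall>r. \<omega> \<notin> B r"
      using Bnull by (subst AE_all_countable) (auto intro: AE_not_in)
    then show ?thesis
    proof (rule AE_mp[OF _ AE_I2], intro impI)
      fix \<omega> assume \<omega>: "\<omega> \<in> space M" and nB: "\<forall>r. \<omega> \<notin> B r"
      show "g \<omega> \<le> f i \<omega>"
      proof (rule ccontr)
        assume "\<not> g \<omega> \<le> f i \<omega>"
        then have lt: "f i \<omega> < g \<omega>" by simp
        obtain z1 :: real where z1: "f i \<omega> < ereal z1" "ereal z1 < g \<omega>"
          using ereal_dense2[OF lt] by blast
        obtain z2 :: real where z2: "ereal z1 < ereal z2" "ereal z2 < g \<omega>"
          using ereal_dense2[OF z1(2)] by blast
        obtain r :: rat where "z1 < real_of_rat r" "real_of_rat r < z2"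
          using of_rat_dense z2(1) by auto
        then have "f i \<omega> < ereal (real_of_rat r)" "ereal (real_of_rat r) < g \<omega>"
        proof -
          have a: "ereal z1 < ereal (real_of_rat r)" "ereal (real_of_rat r) < ereal z2"
            using \<open>z1 < real_of_rat r\<close> \<open>real_of_rat r < z2\<close> by simp_all
          show "f i \<omega> < ereal (real_of_rat r)" using z1(1) a(1) by (rule less_trans)
          show "ereal (real_of_rat r) < g \<omega>" using a(2) z2(2) by (rule less_trans)
        qed
        then have "\<omega> \<in> B r" unfolding B_def using \<omega> by auto
        then show False using nB by auto
      qed
    qed
  qed
  have greatest: "AE \<omega> in M. h \<omega> \<le> g \<omega>"
    if "h \<in> borel_measurable G" "\<forall>i\<in>I. AE \<omega> in M. h \<omega> \<le> f i \<omega>" for h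
  proof -
    have "AE \<omega> in M. \<forall>i\<in>C. h \<omega> \<le> f i \<omega>"
      using that cC by (subst AE_ball_countable[OF cC(1)]) auto
    then show ?thesis unfolding g_def by (auto intro: INF_greatest)
  qed
  show ?thesis unfolding is_ess_inf_def
    using cC gmeas lower greatest unfolding g_def by blast
qed

lemma e1: fixes u f :: real shows "ennreal(u * f) = ennreal u * ennreal f + ennreal (-u) * ennreal (-f)"
proof (cases "u \<ge> 0")
  case True
  then show ?thesis by (cases "f \<ge> 0") (simp_all add: ennreal_neg ennreal_mult[symmetric] mult_nonneg_nonpos)
next
  case False
  then show ?thesis by (cases "f \<ge> 0") (simp_all add: ennreal_neg ennreal_mult[symmetric] mult_nonpos_nonneg)
qed

lemma e2: fixes u f :: real shows "ennreal(-(u * f)) = ennreal u * ennreal (-f) + ennreal (-u) * ennreal f"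
proof (cases "u \<ge> 0")
  case True
  then show ?thesis by (cases "f \<ge> 0") (simp_all add: ennreal_neg ennreal_mult[symmetric] mult_nonneg_nonpos)
next
  case False
  then show ?thesis by (cases "f \<ge> 0") (simp_all add: ennreal_neg ennreal_mult[symmetric] mult_nonpos_nonneg mult_nonpos_nonpos)
qed

lemma e3: fixes a b :: real shows "ennreal(a+b) + ennreal(-a) + ennreal(-b) = ennreal(-(a+b)) + ennreal a + ennreal b"
proof -
  have m': "ennreal (max x 0) = ennreal x" for x :: real by (cases "x \<ge> 0") (auto simp: ennreal_neg max_def)
  have "ennreal(a+b) + ennreal(-a) + ennreal(-b) = ennreal (max (a+b) 0) + ennreal (max (-a) 0) + ennreal (max (-b) 0)"
    by (simp only: m')
  also have "\<dots> = ennreal (max (a+b) 0 + max (-a) 0 + max (-b) 0)"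
    by (simp add: ennreal_plus)
  also have "\<dots> = ennreal (max (-(a+b)) 0 + max a 0 + max b 0)"
    by (rule arg_cong[where f=ennreal]) linarith
  also have "\<dots> = ennreal (max (-(a+b)) 0) + ennreal (max a 0) + ennreal (max b 0)"
    by (simp add: ennreal_plus)
  also have "\<dots> = ennreal(-(a+b)) + ennreal a + ennreal b"
    by (simp only: m')
  finally show ?thesis .
qed

context sigma_finite_subalgebra
begin

lemma rce_mult:
  assumes [measurable]: "u \<in> borel_measurable F" "f \<in> borel_measurable M"
  shows "AE x in M. real_cond_exp M F (\<lambda>x. u x * f x) x = u x * real_cond_exp M F f x"
proof -
  have [measurable]: "u \<in> borel_measurable M" by (rule measurable_from_subalg[OF subalg]) simp
  let ?N = "nn_cond_exp M F"
  have A1: "AE x in M. ?N (\<lambda>x. ennreal (u x * f x)) x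
      = ennreal (u x) * ?N (\<lambda>x. ennreal (f x)) x + ennreal (-u x) * ?N (\<lambda>x. ennreal (-f x)) x"
  proof -
    have eq: "(\<lambda>x. ennreal (u x * f x)) = (\<lambda>x. ennreal (u x) * ennreal (f x) + ennreal (-u x) * ennreal (-f x))"
      by (rule ext) (rule e1)
    have s: "AE x in M. ?N (\<lambda>x. ennreal (u x) * ennreal (f x)) x + ?N (\<lambda>x. ennreal (-u x) * ennreal (-f x)) x
       = ?N (\<lambda>x. ennreal (u x) * ennreal (f x) + ennreal (-u x) * ennreal (-f x)) x"
      by (rule nn_cond_exp_sum) auto
    have p1: "AE x in M. ennreal (u x) * ?N (\<lambda>x. ennreal (f x)) x = ?N (\<lambda>x. ennreal (u x) * ennreal (f x)) x"
      by (rule nn_cond_exp_prod) auto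
    have p2: "AE x in M. ennreal (-u x) * ?N (\<lambda>x. ennreal (-f x)) x = ?N (\<lambda>x. ennreal (-u x) * ennreal (-f x)) x"
      by (rule nn_cond_exp_prod) auto
    show ?thesis using s p1 p2 unfolding eq by auto
  qed
  have A2: "AE x in M. ?N (\<lambda>x. ennreal (-(u x * f x))) x
      = ennreal (u x) * ?N (\<lambda>x. ennreal (-f x)) x + ennreal (-u x) * ?N (\<lambda>x. ennreal (f x)) x"
  proof -
    have eq: "(\<lambda>x. ennreal (-(u x * f x))) = (\<lambda>x. ennreal (u x) * ennreal (-f x) + ennreal (-u x) * ennreal (f x))"
      by (rule ext) (rule e2)
    have s: "AE x in M. ?N (\<lambda>x. ennreal (u x) * ennreal (-f x)) x + ?N (\<lambda>x. ennreal (-u x) * ennreal (f x)) x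
       = ?N (\<lambda>x. ennreal (u x) * ennreal (-f x) + ennreal (-u x) * ennreal (f x)) x"
      by (rule nn_cond_exp_sum) auto
    have p1: "AE x in M. ennreal (u x) * ?N (\<lambda>x. ennreal (-f x)) x = ?N (\<lambda>x. ennreal (u x) * ennreal (-f x)) x"
      by (rule nn_cond_exp_prod) auto
    have p2: "AE x in M. ennreal (-u x) * ?N (\<lambda>x. ennreal (f x)) x = ?N (\<lambda>x. ennreal (-u x) * ennreal (f x)) x"
      by (rule nn_cond_exp_prod) auto
    show ?thesis using s p1 p2 unfolding eq by auto
  qed
  show ?thesis
  proof (rule AE_mp[OF AE_conjI[OF A1 A2] AE_I2], intro impI)
    fix x assume H: "?N (\<lambda>x. ennreal (u x * f x)) x
      = ennreal (u x) * ?N (\<lambda>x. ennreal (f x)) x + ennreal (-u x) * ?N (\<lambda>x. ennreal (-f x)) x \<and>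
      ?N (\<lambda>x. ennreal (-(u x * f x))) x
      = ennreal (u x) * ?N (\<lambda>x. ennreal (-f x)) x + ennreal (-u x) * ?N (\<lambda>x. ennreal (f x)) x"
    show "real_cond_exp M F (\<lambda>x. u x * f x) x = u x * real_cond_exp M F f x"
    proof (cases "u x \<ge> 0")
      case True
      then show ?thesis using H unfolding real_cond_exp_def
        by (simp add: ennreal_neg enn2real_mult right_diff_distrib)
    next
      case False
      then show ?thesis using H unfolding real_cond_exp_def
        by (simp add: ennreal_neg enn2real_mult right_diff_distrib)
    qed
  qed
qed

lemma N_fin_mono:
  assumes [measurable]: "f \<in> borel_measurable M" "g \<in> borel_measurable M"
    and le: "AE x in M. f x \<le> g x" and fin: "AE x in M. nn_cond_exp M F g x \<noteq> \<infinity>"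
  shows "AE x in M. nn_cond_exp M F f x \<noteq> \<infinity>"
  using nn_cond_exp_mono[OF le] fin by (auto simp: top_unique)

lemma N_bound:
  assumes [measurable]: "h \<in> borel_measurable M" "gA \<in> borel_measurable M" "gB \<in> borel_measurable M"
    "aA \<in> borel_measurable F" "aB \<in> borel_measurable F" "b \<in> borel_measurable F"
    and le: "AE x in M. h x \<le> ennreal (aA x) * gA x + ennreal (aB x) * gB x + ennreal (b x)"
    and f1: "AE x in M. nn_cond_exp M F gA x \<noteq> \<infinity>"
    and f2: "AE x in M. nn_cond_exp M F gB x \<noteq> \<infinity>"
  shows "AE x in M. nn_cond_exp M F h x \<noteq> \<infinity>"
proof -
  have [measurable]: "aA \<in> borel_measurable M" "aB \<in> borel_measurable M" "b \<in> borel_measurable M"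
    by (rule measurable_from_subalg[OF subalg], simp)+
  let ?N = "nn_cond_exp M F"
  have s1: "AE x in M. ?N (\<lambda>x. ennreal (aA x) * gA x + ennreal (aB x) * gB x) x + ?N (\<lambda>x. ennreal (b x)) x
      = ?N (\<lambda>x. ennreal (aA x) * gA x + ennreal (aB x) * gB x + ennreal (b x)) x"
    by (rule nn_cond_exp_sum) auto
  have s2: "AE x in M. ?N (\<lambda>x. ennreal (aA x) * gA x) x + ?N (\<lambda>x. ennreal (aB x) * gB x) x
      = ?N (\<lambda>x. ennreal (aA x) * gA x + ennreal (aB x) * gB x) x"
    by (rule nn_cond_exp_sum) auto
  have p1: "AE x in M. ennreal (aA x) * ?N gA x = ?N (\<lambda>x. ennreal (aA x) * gA x) x"
    by (rule nn_cond_exp_prod) auto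
  have p2: "AE x in M. ennreal (aB x) * ?N gB x = ?N (\<lambda>x. ennreal (aB x) * gB x) x"
    by (rule nn_cond_exp_prod) auto
  have b: "AE x in M. ennreal (b x) = ?N (\<lambda>x. ennreal (b x)) x"
    by (rule nn_cond_exp_F_meas) auto
  have fin3: "AE x in M. ?N (\<lambda>x. ennreal (aA x) * gA x + ennreal (aB x) * gB x + ennreal (b x)) x \<noteq> \<infinity>"
    using s1 s2 p1 p2 b f1 f2
  proof eventually_elim
    case (elim x)
    have "ennreal (aA x) * ?N gA x \<noteq> \<top>" "ennreal (aB x) * ?N gB x \<noteq> \<top>"
      using elim(6,7) by (simp_all add: ennreal_mult_eq_top_iff)
    then show ?case using elim by (metis ennreal_add_eq_top ennreal_neq_top infinity_ennreal_def)
  qed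
  show ?thesis by (rule N_fin_mono[OF _ _ le fin3]) auto
qed

lemma cint_mult:
  assumes [measurable]: "u \<in> borel_measurable F" "f \<in> borel_measurable M"
    and fin: "AE x in M. nn_cond_exp M F (\<lambda>x. ennreal \<bar>f x\<bar>) x \<noteq> \<infinity>"
  shows "AE x in M. nn_cond_exp M F (\<lambda>x. ennreal \<bar>u x * f x\<bar>) x \<noteq> \<infinity>"
proof -
  have [measurable]: "u \<in> borel_measurable M" by (rule measurable_from_subalg[OF subalg]) simp
  show ?thesis
    by (rule N_bound[where gA="\<lambda>x. ennreal \<bar>f x\<bar>" and gB="\<lambda>x. ennreal \<bar>f x\<bar>" and aA="\<lambda>x. \<bar>u x\<bar>"
        and aB="\<lambda>x. 0" and b="\<lambda>x. 0"]) (use fin in \<open>auto simp: abs_mult ennreal_mult infinity_ennreal_def\<close>)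
qed

lemma rce_add:
  assumes [measurable]: "f \<in> borel_measurable M" "g \<in> borel_measurable M"
    and ff: "AE x in M. nn_cond_exp M F (\<lambda>x. ennreal \<bar>f x\<bar>) x \<noteq> \<infinity>"
    and gf: "AE x in M. nn_cond_exp M F (\<lambda>x. ennreal \<bar>g x\<bar>) x \<noteq> \<infinity>"
  shows "AE x in M. real_cond_exp M F (\<lambda>x. f x + g x) x = real_cond_exp M F f x + real_cond_exp M F g x"
proof -
  let ?N = "nn_cond_exp M F"
  have fin: "AE x in M. ?N (\<lambda>x. ennreal (h x)) x \<noteq> \<infinity>"
    if [measurable]: "h \<in> borel_measurable M" and le: "\<And>x. \<bar>h x\<bar> \<le> \<bar>f x\<bar> + \<bar>g x\<bar>" for h
  proof -
    have le': "ennreal (h x) \<le> ennreal 1 * ennreal \<bar>f x\<bar> + ennreal 1 * ennreal \<bar>g x\<bar> + ennreal 0" for x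
    proof -
      have "h x \<le> \<bar>f x\<bar> + \<bar>g x\<bar>" using le[of x] by linarith
      then have "ennreal (h x) \<le> ennreal (\<bar>f x\<bar> + \<bar>g x\<bar>)" by (rule ennreal_leI)
      then show ?thesis by (simp add: ennreal_plus)
    qed
    show ?thesis
      by (rule N_bound[where gA="\<lambda>x. ennreal \<bar>f x\<bar>" and gB="\<lambda>x. ennreal \<bar>g x\<bar>" and aA="\<lambda>x. 1"
        and aB="\<lambda>x. 1" and b="\<lambda>x. 0"]) (use le' ff gf in \<open>auto simp: infinity_ennreal_def\<close>)
  qed
  have F1: "AE x in M. ?N (\<lambda>x. ennreal (f x + g x)) x \<noteq> \<infinity>" by (rule fin) auto
  have F2: "AE x in M. ?N (\<lambda>x. ennreal (-(f x + g x))) x \<noteq> \<infinity>" by (rule fin) auto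
  have F3: "AE x in M. ?N (\<lambda>x. ennreal (f x)) x \<noteq> \<infinity>" by (rule fin) auto
  have F4: "AE x in M. ?N (\<lambda>x. ennreal (-f x)) x \<noteq> \<infinity>" by (rule fin) auto
  have F5: "AE x in M. ?N (\<lambda>x. ennreal (g x)) x \<noteq> \<infinity>" by (rule fin) auto
  have F6: "AE x in M. ?N (\<lambda>x. ennreal (-g x)) x \<noteq> \<infinity>" by (rule fin) auto
  have eq: "(\<lambda>x. ennreal (f x + g x) + ennreal (-f x) + ennreal (-g x)) = (\<lambda>x. ennreal (-(f x + g x)) + ennreal (f x) + ennreal (g x))"
    by (rule ext) (rule e3)
  have L1: "AE x in M. ?N (\<lambda>x. ennreal (f x + g x) + ennreal (-f x)) x + ?N (\<lambda>x. ennreal (-g x)) x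
     = ?N (\<lambda>x. ennreal (f x + g x) + ennreal (-f x) + ennreal (-g x)) x"
    by (rule nn_cond_exp_sum) auto
  have L2: "AE x in M. ?N (\<lambda>x. ennreal (f x + g x)) x + ?N (\<lambda>x. ennreal (-f x)) x
     = ?N (\<lambda>x. ennreal (f x + g x) + ennreal (-f x)) x"
    by (rule nn_cond_exp_sum) auto
  have R1: "AE x in M. ?N (\<lambda>x. ennreal (-(f x + g x)) + ennreal (f x)) x + ?N (\<lambda>x. ennreal (g x)) x
     = ?N (\<lambda>x. ennreal (-(f x + g x)) + ennreal (f x) + ennreal (g x)) x"
    by (rule nn_cond_exp_sum) auto
  have R2: "AE x in M. ?N (\<lambda>x. ennreal (-(f x + g x))) x + ?N (\<lambda>x. ennreal (f x)) x
     = ?N (\<lambda>x. ennreal (-(f x + g x)) + ennreal (f x)) x"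
    by (rule nn_cond_exp_sum) auto
  have E: "AE x in M. ?N (\<lambda>x. ennreal (f x + g x)) x + ?N (\<lambda>x. ennreal (-f x)) x + ?N (\<lambda>x. ennreal (-g x)) x
     = ?N (\<lambda>x. ennreal (-(f x + g x))) x + ?N (\<lambda>x. ennreal (f x)) x + ?N (\<lambda>x. ennreal (g x)) x"
    using L1 L2 R1 R2 unfolding eq by auto
  show ?thesis
  proof (rule AE_mp[OF AE_conjI[OF E AE_conjI[OF F1 AE_conjI[OF F2 AE_conjI[OF F3 AE_conjI[OF F4 AE_conjI[OF F5 F6]]]]]] AE_I2], intro impI)
    fix x
    assume H: "?N (\<lambda>x. ennreal (f x + g x)) x + ?N (\<lambda>x. ennreal (-f x)) x + ?N (\<lambda>x. ennreal (-g x)) x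
     = ?N (\<lambda>x. ennreal (-(f x + g x))) x + ?N (\<lambda>x. ennreal (f x)) x + ?N (\<lambda>x. ennreal (g x)) x \<and>
      ?N (\<lambda>x. ennreal (f x + g x)) x \<noteq> \<infinity> \<and> ?N (\<lambda>x. ennreal (-(f x + g x))) x \<noteq> \<infinity> \<and>
      ?N (\<lambda>x. ennreal (f x)) x \<noteq> \<infinity> \<and> ?N (\<lambda>x. ennreal (-f x)) x \<noteq> \<infinity> \<and>
      ?N (\<lambda>x. ennreal (g x)) x \<noteq> \<infinity> \<and> ?N (\<lambda>x. ennreal (-g x)) x \<noteq> \<infinity>"
    define a where "a = ?N (\<lambda>x. ennreal (f x + g x)) x"
    define b where "b = ?N (\<lambda>x. ennreal (-(f x + g x))) x"
    define c where "c = ?N (\<lambda>x. ennreal (f x)) x"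
    define d where "d = ?N (\<lambda>x. ennreal (-f x)) x"
    define e where "e = ?N (\<lambda>x. ennreal (g x)) x"
    define k where "k = ?N (\<lambda>x. ennreal (-g x)) x"
    have H': "a + d + k = b + c + e" "a \<noteq> \<infinity>" "b \<noteq> \<infinity>" "c \<noteq> \<infinity>" "d \<noteq> \<infinity>" "e \<noteq> \<infinity>" "k \<noteq> \<infinity>"
      using H unfolding a_def b_def c_def d_def e_def k_def by auto
    have "enn2real (a + d + k) = enn2real (b + c + e)" by (simp only: H'(1))
    moreover have "enn2real (a + d + k) = enn2real a + enn2real d + enn2real k"
      using H'(2-7) by (simp add: enn2real_plus less_top[symmetric] ennreal_add_eq_top)
    moreover have "enn2real (b + c + e) = enn2real b + enn2real c + enn2real e"
      using H'(2-7) by (simp add: enn2real_plus less_top[symmetric] ennreal_add_eq_top)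
    ultimately have "enn2real a + enn2real d + enn2real k = enn2real b + enn2real c + enn2real e"
      by simp
    then show "real_cond_exp M F (\<lambda>x. f x + g x) x = real_cond_exp M F f x + real_cond_exp M F g x"
      unfolding real_cond_exp_def a_def[symmetric] b_def[symmetric] c_def[symmetric] d_def[symmetric]
        e_def[symmetric] k_def[symmetric] by simp
  qed
qed

end

lemma ess_inf_is:
  assumes "prob_space M" "subalgebra M G" "\<And>i. i \<in> I \<Longrightarrow> f i \<in> borel_measurable G"
  shows "is_ess_inf M G I f (ess_inf M G I f)"
proof -
  obtain C where C: "countable C \<and> C \<subseteq> I \<and> is_ess_inf M G I f (\<lambda>\<omega>. INF i\<in>C. f i \<omega>)"
    using ess_inf_countable[OF assms] by (rule exE)
  then have "is_ess_inf M G I f (\<lambda>\<omega>. INF i\<in>C. f i \<omega>)" by (elim conjE)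
  then show ?thesis unfolding ess_inf_def by (rule someI[where P="is_ess_inf M G I f"])
qed

lemma ess_inf_unique:
  assumes "is_ess_inf M G I f g1" "is_ess_inf M G I f g2"
  shows "AE \<omega> in M. g1 \<omega> = g2 \<omega>"
proof -
  have "AE \<omega> in M. g1 \<omega> \<le> g2 \<omega>" using assms unfolding is_ess_inf_def by blast
  moreover have "AE \<omega> in M. g2 \<omega> \<le> g1 \<omega>" using assms unfolding is_ess_inf_def by blast
  ultimately show ?thesis by eventually_elim simp
qed

lemma ess_sup_unique:
  assumes "is_ess_sup M G I f g1" "is_ess_sup M G I f g2"
  shows "AE \<omega> in M. g1 \<omega> = g2 \<omega>"
proof -
  have "AE \<omega> in M. g1 \<omega> \<le> g2 \<omega>" using assms unfolding is_ess_sup_def by blast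
  moreover have "AE \<omega> in M. g2 \<omega> \<le> g1 \<omega>" using assms unfolding is_ess_sup_def by blast
  ultimately show ?thesis by eventually_elim simp
qed

lemma ess_sup_eq:
  assumes "is_ess_sup M G I f g"
  shows "AE \<omega> in M. g \<omega> = ess_sup M G I f \<omega>"
proof -
  have "is_ess_sup M G I f (ess_sup M G I f)" unfolding ess_sup_def using assms by (rule someI[where P="is_ess_sup M G I f"])
  with assms show ?thesis by (rule ess_sup_unique)
qed

lemma conj_exp_cases:
  assumes "1 \<le> p"
  shows "(p = 1 \<and> conj_exp p = \<infinity>) \<or> (p = \<infinity> \<and> conj_exp p = 1) \<or>
    (\<exists>r. 1 < r \<and> p = ennreal r \<and> conj_exp p = ennreal (r / (r - 1)))"
proof (cases "p = 1")
  case True then show ?thesis by (simp add: conj_exp_def)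
next
  case F1: False
  show ?thesis
  proof (cases "p = \<infinity>")
    case True then show ?thesis by (simp add: conj_exp_def)
  next
    case False
    define r where "r = enn2real p"
    have pr: "p = ennreal r" unfolding r_def using False by (simp add: ennreal_enn2real_if)
    have "1 \<le> r" using assms pr by (simp add: ennreal_le_iff2 flip: ennreal_1) 
    moreover have "r \<noteq> 1" using F1 pr by auto
    ultimately have r1: "1 < r" by simp
    have "p - 1 = ennreal (r - 1)" using pr by (simp add: ennreal_minus flip: ennreal_1)
    then have "conj_exp p = ennreal (r / (r - 1))"
      using F1 False r1 pr by (simp add: conj_exp_def divide_ennreal)
    then show ?thesis using r1 pr by blast
  qed
qed

lemma LpG_fin:
  assumes "p \<noteq> \<infinity>"
  shows "X \<in> LpG M G p \<longleftrightarrow> X \<in> borel_measurable M \<and>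
     (AE \<omega> in M. nn_cond_exp M G (\<lambda>\<omega>. ennreal (\<bar>X \<omega>\<bar> powr enn2real p)) \<omega> \<noteq> \<infinity>)"
  unfolding LpG_def cond_norm_def using assms by (simp add: Let_def)

lemma LpG_inf_bound:
  assumes P: "prob_space M" and sub: "subalgebra M G" and X: "X \<in> LpG M G \<infinity>"
  shows "\<exists>g\<in>borel_measurable G. AE \<omega> in M. \<bar>X \<omega>\<bar> \<le> g \<omega>"
proof -
  define I where "I = {Y :: 'a \<Rightarrow> ereal. Y \<in> borel_measurable G \<and> (AE \<omega> in M. ereal \<bar>X \<omega>\<bar> \<le> Y \<omega>)}"
  have Im: "\<And>Y. Y \<in> I \<Longrightarrow> (\<lambda>Y. Y) Y \<in> borel_measurable G" unfolding I_def by auto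
  have EI: "is_ess_inf M G I (\<lambda>Y. Y) (ess_inf M G I (\<lambda>Y. Y))"
    by (rule ess_inf_is[OF P sub]) (simp add: I_def)
  obtain C where C: "countable C" "C \<subseteq> I" "is_ess_inf M G I (\<lambda>Y. Y) (\<lambda>\<omega>. INF Y\<in>C. Y \<omega>)"
    using ess_inf_countable[OF P sub, of I "\<lambda>Y. Y"] by (auto simp: I_def)
  have cn: "AE \<omega> in M. cond_norm M G \<infinity> X \<omega> < \<infinity>" using X unfolding LpG_def by auto
  have "AE \<omega> in M. ess_inf M G I (\<lambda>Y. Y) \<omega> = (INF Y\<in>C. Y \<omega>)"
    by (rule ess_inf_unique[OF EI C(3)])
  then have fin: "AE \<omega> in M. (INF Y\<in>C. Y \<omega>) < \<infinity>"
    using cn unfolding cond_norm_def I_def by eventually_elim auto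
  have bd: "AE \<omega> in M. \<forall>Y\<in>C. ereal \<bar>X \<omega>\<bar> \<le> Y \<omega>"
    using C(1,2) unfolding I_def by (subst AE_ball_countable[OF C(1)]) auto
  define g where "g = (\<lambda>\<omega>. real_of_ereal (INF Y\<in>C. Y \<omega>))"
  have gm: "g \<in> borel_measurable G" unfolding g_def
    using C(1,2) unfolding I_def by (intro borel_measurable_real_of_ereal borel_measurable_INF) auto
  have "AE \<omega> in M. \<bar>X \<omega>\<bar> \<le> g \<omega>"
    using fin bd
  proof eventually_elim
    case (elim \<omega>)
    have le: "ereal \<bar>X \<omega>\<bar> \<le> (INF Y\<in>C. Y \<omega>)" using elim(2) by (auto intro: INF_greatest)
    then have "(INF Y\<in>C. Y \<omega>) = ereal (g \<omega>)" unfolding g_def using elim(1)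
      by (cases "(INF Y\<in>C. Y \<omega>)") auto
    then show ?case using le by simp
  qed
  then show ?thesis using gm by (rule bexI)
qed

lemma LpG_inf_boundI:
  assumes P: "prob_space M" and sub: "subalgebra M G" and Xm: "X \<in> borel_measurable M"
    and gm: "g \<in> borel_measurable G" and bd: "AE \<omega> in M. \<bar>X \<omega>\<bar> \<le> g \<omega>"
  shows "X \<in> LpG M G \<infinity>"
proof -
  define I where "I = {Y :: 'a \<Rightarrow> ereal. Y \<in> borel_measurable G \<and> (AE \<omega> in M. ereal \<bar>X \<omega>\<bar> \<le> Y \<omega>)}"
  have Im: "\<And>Y. Y \<in> I \<Longrightarrow> (\<lambda>Y. Y) Y \<in> borel_measurable G" unfolding I_def by auto
  have EI: "is_ess_inf M G I (\<lambda>Y. Y) (ess_inf M G I (\<lambda>Y. Y))"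
    by (rule ess_inf_is[OF P sub]) (simp add: I_def)
  have gI1: "(\<lambda>\<omega>. ereal (g \<omega>)) \<in> borel_measurable G" using gm by (rule borel_measurable_ereal)
  have gI2: "AE \<omega> in M. ereal \<bar>X \<omega>\<bar> \<le> ereal (g \<omega>)" using bd by simp
  have gI: "(\<lambda>\<omega>. ereal (g \<omega>)) \<in> I" unfolding I_def using gI1 gI2 by (intro CollectI conjI)
  have lb: "\<forall>Y\<in>I. AE \<omega> in M. ess_inf M G I (\<lambda>Y. Y) \<omega> \<le> Y \<omega>"
    using EI unfolding is_ess_inf_def by (elim conjE)
  have le: "AE \<omega> in M. ess_inf M G I (\<lambda>Y. Y) \<omega> \<le> ereal (g \<omega>)"
    using bspec[OF lb gI] by simp
  have cn: "cond_norm M G \<infinity> X = ess_inf M G I (\<lambda>Y. Y)" unfolding cond_norm_def I_def by (simp only: simp_thms if_True)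
  have "AE \<omega> in M. cond_norm M G \<infinity> X \<omega> < \<infinity>"
    using le unfolding cn
  proof eventually_elim
    case (elim \<omega>)
    have "ereal (g \<omega>) < \<infinity>" by simp
    then show ?case using le_less_trans[OF elim] by blast
  qed
  then show ?thesis unfolding LpG_def using Xm by blast
qed

lemma powr_sum_le:
  fixes u v s :: real assumes "0 \<le> s"
  shows "\<bar>u + v\<bar> powr s \<le> 2 powr s * (\<bar>u\<bar> powr s + \<bar>v\<bar> powr s)"
proof -
  define m where "m = max \<bar>u\<bar> \<bar>v\<bar>"
  have "\<bar>u + v\<bar> \<le> 2 * m" unfolding m_def by linarith
  then have "\<bar>u + v\<bar> powr s \<le> (2 * m) powr s" using assms by (intro powr_mono2) auto
  also have "\<dots> = 2 powr s * m powr s" using powr_mult[of 2 m s] unfolding m_def by simp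
  also have "m powr s \<le> \<bar>u\<bar> powr s + \<bar>v\<bar> powr s" unfolding m_def by (simp add: max_def)
  then have "2 powr s * m powr s \<le> 2 powr s * (\<bar>u\<bar> powr s + \<bar>v\<bar> powr s)" by simp
  finally show ?thesis .
qed

lemma fms_of:
  assumes "prob_space M" "subalgebra M G"
  shows "sigma_finite_subalgebra M G"
proof -
  interpret prob_space M by fact
  interpret S: finite_measure_subalgebra M G by unfold_locales (rule assms(2))
  show ?thesis by unfold_locales
qed

lemma Pq_facts:
  assumes P: "prob_space M" and sub: "subalgebra M G" and W: "W \<in> Pq M G q"
  shows "W \<in> borel_measurable M" "AE x in M. W x \<ge> 0" "AE x in M. real_cond_exp M G W x = 1"
    "AE x in M. nn_cond_exp M G (\<lambda>x. ennreal \<bar>W x\<bar>) x \<noteq> \<infinity>"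
proof -
  interpret sigma_finite_subalgebra M G using fms_of[OF P sub] .
  show Wm[measurable]: "W \<in> borel_measurable M" and W0: "AE x in M. W x \<ge> 0"
    and W1: "AE x in M. real_cond_exp M G W x = 1"
    using W unfolding Pq_def LpG_def by auto
  have c1: "AE x in M. nn_cond_exp M G (\<lambda>x. ennreal (- W x)) x = nn_cond_exp M G (\<lambda>x. 0) x"
    by (rule nn_cond_exp_cong) (use W0 in \<open>auto simp: ennreal_neg\<close>)
  have c2: "AE x in M. (0::ennreal) = nn_cond_exp M G (\<lambda>x. 0) x"
    by (rule nn_cond_exp_F_meas) simp
  have c3: "AE x in M. nn_cond_exp M G (\<lambda>x. ennreal \<bar>W x\<bar>) x = nn_cond_exp M G (\<lambda>x. ennreal (W x)) x"
    by (rule nn_cond_exp_cong) (use W0 in auto)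
  show "AE x in M. nn_cond_exp M G (\<lambda>x. ennreal \<bar>W x\<bar>) x \<noteq> \<infinity>"
    using c1 c2 c3 W1
  proof eventually_elim
    case (elim x)
    then have "enn2real (nn_cond_exp M G (\<lambda>x. ennreal (W x)) x) = 1"
      unfolding real_cond_exp_def by simp
    then show ?case using elim(3) by auto
  qed
qed

lemma cint_prod:
  assumes P: "prob_space M" and sub: "subalgebra M G" and p1: "1 \<le> p"
    and X: "X \<in> LpG M G p" and W: "W \<in> LpG M G (conj_exp p)"
  shows "AE x in M. nn_cond_exp M G (\<lambda>x. ennreal \<bar>X x * W x\<bar>) x \<noteq> \<infinity>"
proof -
  interpret sigma_finite_subalgebra M G using fms_of[OF P sub] .
  have Xm[measurable]: "X \<in> borel_measurable M" and Wm[measurable]: "W \<in> borel_measurable M"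
    using X W unfolding LpG_def by auto
  have fin1: "AE x in M. nn_cond_exp M G (\<lambda>x. ennreal \<bar>Y x\<bar>) x \<noteq> \<infinity>"
    if "Y \<in> LpG M G 1" for Y
  proof -
    have "AE x in M. nn_cond_exp M G (\<lambda>x. ennreal (\<bar>Y x\<bar> powr enn2real 1)) x \<noteq> \<infinity>"
      using that by (subst (asm) LpG_fin) auto
    then show ?thesis by simp
  qed
  from conj_exp_cases[OF p1] show ?thesis
  proof (elim disjE exE conjE)
    assume "p = 1" "conj_exp p = \<infinity>"
    then obtain g where gm[measurable]: "g \<in> borel_measurable G" and gb: "AE x in M. \<bar>W x\<bar> \<le> g x"
      using LpG_inf_bound[OF P sub] W by metis
    have fX: "AE x in M. nn_cond_exp M G (\<lambda>x. ennreal \<bar>X x\<bar>) x \<noteq> \<infinity>"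
      using fin1 X \<open>p = 1\<close> by simp
    show ?thesis
    proof (rule N_bound[where gA="\<lambda>x. ennreal \<bar>X x\<bar>" and gB="\<lambda>x. ennreal \<bar>X x\<bar>" and aA="\<lambda>x. \<bar>g x\<bar>"
        and aB="\<lambda>x. 0" and b="\<lambda>x. 0"])
      show "AE x in M. ennreal \<bar>X x * W x\<bar> \<le> ennreal \<bar>g x\<bar> * ennreal \<bar>X x\<bar> + ennreal 0 * ennreal \<bar>X x\<bar> + ennreal 0"
        using gb
      proof eventually_elim
        case (elim x)
        have "\<bar>X x * W x\<bar> \<le> \<bar>g x\<bar> * \<bar>X x\<bar>"
        proof -
          have "\<bar>W x\<bar> * \<bar>X x\<bar> \<le> g x * \<bar>X x\<bar>" using elim by (rule mult_right_mono) simp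
          also have "\<dots> \<le> \<bar>g x\<bar> * \<bar>X x\<bar>" by (rule mult_right_mono) auto
          finally show ?thesis by (simp add: abs_mult mult.commute)
        qed
        then have "ennreal \<bar>X x * W x\<bar> \<le> ennreal (\<bar>g x\<bar> * \<bar>X x\<bar>)" by (rule ennreal_leI)
        then show ?case by (simp add: ennreal_mult)
      qed
    qed (use fX in \<open>auto simp: infinity_ennreal_def\<close>)
  next
    assume "p = \<infinity>" "conj_exp p = 1"
    then obtain g where gm[measurable]: "g \<in> borel_measurable G" and gb: "AE x in M. \<bar>X x\<bar> \<le> g x"
      using LpG_inf_bound[OF P sub] X by metis
    have fW: "AE x in M. nn_cond_exp M G (\<lambda>x. ennreal \<bar>W x\<bar>) x \<noteq> \<infinity>"
      using fin1 W \<open>conj_exp p = 1\<close> by simp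
    show ?thesis
    proof (rule N_bound[where gA="\<lambda>x. ennreal \<bar>W x\<bar>" and gB="\<lambda>x. ennreal \<bar>W x\<bar>" and aA="\<lambda>x. \<bar>g x\<bar>"
        and aB="\<lambda>x. 0" and b="\<lambda>x. 0"])
      show "AE x in M. ennreal \<bar>X x * W x\<bar> \<le> ennreal \<bar>g x\<bar> * ennreal \<bar>W x\<bar> + ennreal 0 * ennreal \<bar>W x\<bar> + ennreal 0"
        using gb
      proof eventually_elim
        case (elim x)
        have "\<bar>X x * W x\<bar> \<le> \<bar>g x\<bar> * \<bar>W x\<bar>"
        proof -
          have "\<bar>X x\<bar> * \<bar>W x\<bar> \<le> g x * \<bar>W x\<bar>" using elim by (rule mult_right_mono) simp
          also have "\<dots> \<le> \<bar>g x\<bar> * \<bar>W x\<bar>" by (rule mult_right_mono) auto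
          finally show ?thesis by (simp add: abs_mult)
        qed
        then have "ennreal \<bar>X x * W x\<bar> \<le> ennreal (\<bar>g x\<bar> * \<bar>W x\<bar>)" by (rule ennreal_leI)
        then show ?case by (simp add: ennreal_mult)
      qed
    qed (use fW in \<open>auto simp: infinity_ennreal_def\<close>)
  next
    fix r :: real assume r1: "1 < r" and pr: "p = ennreal r" and qr: "conj_exp p = ennreal (r / (r - 1))"
    define r' where "r' = r / (r - 1)"
    have r'1: "1 < r'" unfolding r'_def using r1 by (simp add: field_simps)
    have sum1: "1 / r + 1 / r' = 1" unfolding r'_def using r1 by (simp add: field_simps)
    have fX: "AE x in M. nn_cond_exp M G (\<lambda>x. ennreal (\<bar>X x\<bar> powr r)) x \<noteq> \<infinity>"
      using X pr r1 by (subst (asm) LpG_fin) auto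
    have fW: "AE x in M. nn_cond_exp M G (\<lambda>x. ennreal (\<bar>W x\<bar> powr r')) x \<noteq> \<infinity>"
      using W qr r1 unfolding r'_def by (subst (asm) LpG_fin) auto
    show ?thesis
    proof (rule N_bound[where gA="\<lambda>x. ennreal (\<bar>X x\<bar> powr r)" and gB="\<lambda>x. ennreal (\<bar>W x\<bar> powr r')"
        and aA="\<lambda>x. 1 / r" and aB="\<lambda>x. 1 / r'" and b="\<lambda>x. 0"])
      show "AE x in M. ennreal \<bar>X x * W x\<bar> \<le> ennreal (1 / r) * ennreal (\<bar>X x\<bar> powr r)
          + ennreal (1 / r') * ennreal (\<bar>W x\<bar> powr r') + ennreal 0"
      proof (rule AE_I2)
        fix x
        have "\<bar>X x * W x\<bar> \<le> \<bar>X x\<bar> powr r / r + \<bar>W x\<bar> powr r' / r'"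
          unfolding abs_mult by (rule Youngs_inequality[OF r1 r'1 sum1]) auto
        then have "ennreal \<bar>X x * W x\<bar> \<le> ennreal (1 / r * \<bar>X x\<bar> powr r + 1 / r' * \<bar>W x\<bar> powr r')"
          by (intro ennreal_leI) simp
        also have "\<dots> = ennreal (1 / r) * ennreal (\<bar>X x\<bar> powr r) + ennreal (1 / r') * ennreal (\<bar>W x\<bar> powr r')"
          using r1 r'1 by (subst (1 2) ennreal_mult[symmetric]) (auto simp: ennreal_plus)
        finally show "ennreal \<bar>X x * W x\<bar> \<le> ennreal (1 / r) * ennreal (\<bar>X x\<bar> powr r)
          + ennreal (1 / r') * ennreal (\<bar>W x\<bar> powr r') + ennreal 0" by simp
      qed
    qed (use fX fW in \<open>auto simp: infinity_ennreal_def\<close>)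
  qed
qed

lemma Lp_affine:
  assumes P: "prob_space M" and sub: "subalgebra M G" and p1: "1 \<le> p"
    and X: "X \<in> LpG M G p" and am[measurable]: "a \<in> borel_measurable G" and bm[measurable]: "b \<in> borel_measurable G"
  shows "(\<lambda>x. a x * X x + b x) \<in> LpG M G p"
proof -
  interpret sigma_finite_subalgebra M G using fms_of[OF P sub] .
  have Xm[measurable]: "X \<in> borel_measurable M" using X unfolding LpG_def by auto
  have [measurable]: "a \<in> borel_measurable M" "b \<in> borel_measurable M"
    by (rule measurable_from_subalg[OF subalg], simp)+
  have Ym: "(\<lambda>x. a x * X x + b x) \<in> borel_measurable M" by measurable
  show ?thesis
  proof (cases "p = \<infinity>")
    case True
    then obtain g where gm[measurable]: "g \<in> borel_measurable G" and gb: "AE x in M. \<bar>X x\<bar> \<le> g x"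
      using LpG_inf_bound[OF P sub] X by metis
    have "AE x in M. \<bar>a x * X x + b x\<bar> \<le> \<bar>a x\<bar> * g x + \<bar>b x\<bar>"
      using gb
    proof eventually_elim
      case (elim x)
      have "\<bar>a x * X x + b x\<bar> \<le> \<bar>a x\<bar> * \<bar>X x\<bar> + \<bar>b x\<bar>"
        by (metis abs_mult abs_triangle_ineq)
      also have "\<bar>a x\<bar> * \<bar>X x\<bar> \<le> \<bar>a x\<bar> * g x" using elim by (rule mult_left_mono) simp
      finally show ?case by simp
    qed
    then show ?thesis unfolding True
      by (rule LpG_inf_boundI[OF P sub Ym, rotated]) measurable
  next
    case False
    define s where "s = enn2real p"
    have s0: "0 \<le> s" unfolding s_def by simp
    have fX: "AE x in M. nn_cond_exp M G (\<lambda>x. ennreal (\<bar>X x\<bar> powr s)) x \<noteq> \<infinity>"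
      using X False unfolding s_def by (subst (asm) LpG_fin) auto
    have "AE x in M. nn_cond_exp M G (\<lambda>x. ennreal (\<bar>a x * X x + b x\<bar> powr s)) x \<noteq> \<infinity>"
    proof (rule N_bound[where gA="\<lambda>x. ennreal (\<bar>X x\<bar> powr s)" and gB="\<lambda>x. ennreal (\<bar>X x\<bar> powr s)"
        and aA="\<lambda>x. 2 powr s * \<bar>a x\<bar> powr s" and aB="\<lambda>x. 0" and b="\<lambda>x. 2 powr s * \<bar>b x\<bar> powr s"])
      show "AE x in M. ennreal (\<bar>a x * X x + b x\<bar> powr s) \<le> ennreal (2 powr s * \<bar>a x\<bar> powr s) * ennreal (\<bar>X x\<bar> powr s)
          + ennreal 0 * ennreal (\<bar>X x\<bar> powr s) + ennreal (2 powr s * \<bar>b x\<bar> powr s)"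
      proof (rule AE_I2)
        fix x
        have "\<bar>a x * X x + b x\<bar> powr s \<le> 2 powr s * (\<bar>a x * X x\<bar> powr s + \<bar>b x\<bar> powr s)"
          by (rule powr_sum_le[OF s0])
        also have "\<dots> = 2 powr s * \<bar>a x\<bar> powr s * \<bar>X x\<bar> powr s + 2 powr s * \<bar>b x\<bar> powr s"
          by (simp add: abs_mult powr_mult algebra_simps)
        finally have "ennreal (\<bar>a x * X x + b x\<bar> powr s) \<le> ennreal (2 powr s * \<bar>a x\<bar> powr s * \<bar>X x\<bar> powr s + 2 powr s * \<bar>b x\<bar> powr s)"
          by (rule ennreal_leI)
        also have "\<dots> = ennreal (2 powr s * \<bar>a x\<bar> powr s) * ennreal (\<bar>X x\<bar> powr s) + ennreal (2 powr s * \<bar>b x\<bar> powr s)"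
          by (subst ennreal_mult[symmetric]) (auto simp: ennreal_plus)
        finally show "ennreal (\<bar>a x * X x + b x\<bar> powr s) \<le> ennreal (2 powr s * \<bar>a x\<bar> powr s) * ennreal (\<bar>X x\<bar> powr s)
          + ennreal 0 * ennreal (\<bar>X x\<bar> powr s) + ennreal (2 powr s * \<bar>b x\<bar> powr s)" by simp
      qed
    qed (use fX in \<open>auto simp: infinity_ennreal_def\<close>)
    then show ?thesis using Ym False unfolding s_def by (subst LpG_fin) auto
  qed
qed

theorem mainTheorem6:
  fixes M G :: "'a measure" and p :: ennreal
    and K :: "('a \<Rightarrow> real) \<Rightarrow> ('a \<Rightarrow> real) \<Rightarrow> 'a \<Rightarrow> ereal"
  assumes "prob_space M" and "subalgebra M G" and "1 \<le> p"
    and "class_M M G p K"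
    and "Ys \<in> L0 G" and "Zs \<in> Pq M G (conj_exp p)"
  shows "AE \<omega> in M. K Ys Zs \<omega> =
           ess_sup M G (Pq M G (conj_exp p))
             (\<lambda>Z. ess_inf M G (acc_set M G p Ys Zs)
                    (\<lambda>X. K (real_cond_exp M G (\<lambda>x. - X x * Z x)) Z)) \<omega>"
proof -
  note P = assms(1) and sub = assms(2) and p1 = assms(3) and CM = assms(4)
  interpret prob_space M by (rule P)
  interpret sigma_finite_subalgebra M G using fms_of[OF P sub] .
  define q where "q = conj_exp p"
  have Ysm[measurable]: "Ys \<in> borel_measurable G" using assms(5) unfolding L0_def .
  have Ysm2[measurable]: "Ys \<in> borel_measurable M" by (rule measurable_from_subalg[OF sub Ysm])
  have Zs: "Zs \<in> Pq M G q" using assms(6) unfolding q_def .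
  have spG: "space G = space M" using sub unfolding subalgebra_def by simp
  have KM: "\<forall>Y\<in>L0 G. \<forall>Z\<in>Pq M G q. K Y Z \<in> borel_measurable G \<and> (AE \<omega> in M. K Y Z \<omega> > -\<infinity>)"
    using CM unfolding class_M_def Let_def q_def by (elim conjE)
  have Kmono: "\<forall>Y\<in>L0 G. \<forall>Y'\<in>L0 G. \<forall>Z\<in>Pq M G q.
       (AE \<omega> in M. Y \<omega> \<le> Y' \<omega>) \<longrightarrow> (AE \<omega> in M. K Y Z \<omega> \<le> K Y' Z \<omega>)"
    using CM unfolding class_M_def Let_def q_def by (elim conjE)
  have Kiv: "\<forall>Ys\<in>L0 G. \<forall>Zs\<in>Pq M G q. \<forall>A\<in>sets G. \<forall>\<alpha>\<in>L0 G.
       (AE \<omega> in M. \<omega> \<in> A \<longrightarrow> K Ys Zs \<omega> < ereal (\<alpha> \<omega>)) \<longrightarrow>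
       (\<exists>S\<in>L0pp M G. \<exists>X\<in>LpG M G p.
          \<forall>Y\<in>L0 G. \<forall>Z\<in>Pq M G q.
            (AE \<omega> in M. \<omega> \<in> A \<longrightarrow> K Y Z \<omega> \<ge> ereal (\<alpha> \<omega>)) \<longrightarrow>
            (AE \<omega> in M. \<omega> \<in> A \<longrightarrow>
               Ys \<omega> * S \<omega> + real_cond_exp M G (\<lambda>x. X x * Zs x) \<omega>
                 < Y \<omega> * S \<omega> + real_cond_exp M G (\<lambda>x. X x * Z x) \<omega>))"
    using CM unfolding class_M_def Let_def q_def by (elim conjE)
  define Acc where "Acc = acc_set M G p Ys Zs"
  define f where "f = (\<lambda>Z X. K (real_cond_exp M G (\<lambda>x. - X x * Z x)) Z)"
  define Fz where "Fz = (\<lambda>Z. ess_inf M G Acc (f Z))"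
  have ceL0: "real_cond_exp M G h \<in> L0 G" for h unfolding L0_def by simp
  have fm: "f Z X \<in> borel_measurable G" if "Z \<in> Pq M G q" for Z X
    using KM ceL0 that unfolding f_def by blast
  have Fis: "is_ess_inf M G Acc (f Z) (Fz Z)" if "Z \<in> Pq M G q" for Z
    unfolding Fz_def by (rule ess_inf_is[OF P sub fm[OF that]])
  define \<kappa> where "\<kappa> = K Ys Zs"
  have \<kappa>m[measurable]: "\<kappa> \<in> borel_measurable G" and \<kappa>fin: "AE \<omega> in M. \<kappa> \<omega> > -\<infinity>"
    using KM assms(5) Zs unfolding \<kappa>_def by blast+
  have least: "AE \<omega> in M. \<kappa> \<omega> \<le> h \<omega>"
    if hm: "h \<in> borel_measurable G" and hb: "\<forall>Z\<in>Pq M G q. AE \<omega> in M. Fz Z \<omega> \<le> h \<omega>" for h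
  proof -
    have "\<forall>X\<in>Acc. AE \<omega> in M. \<kappa> \<omega> \<le> f Zs X \<omega>"
    proof
      fix X assume "X \<in> Acc"
      then have "AE \<omega> in M. Ys \<omega> \<le> real_cond_exp M G (\<lambda>x. - X x * Zs x) \<omega>"
        unfolding Acc_def acc_set_def by auto
      then show "AE \<omega> in M. \<kappa> \<omega> \<le> f Zs X \<omega>"
        using Kmono assms(5) ceL0 Zs unfolding \<kappa>_def f_def by blast
    qed
    then have "AE \<omega> in M. \<kappa> \<omega> \<le> Fz Zs \<omega>"
      using Fis[OF Zs] \<kappa>m unfolding is_ess_inf_def by blast
    then show ?thesis using bspec[OF hb Zs] by eventually_elim (rule order_trans)
  qed
  have upper: "AE \<omega> in M. Fz Z \<omega> \<le> \<kappa> \<omega>" if Z: "Z \<in> Pq M G q" for Z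
  proof -
    define \<eta> where "\<eta> = Fz Z"
    have \<eta>is: "is_ess_inf M G Acc (f Z) \<eta>" unfolding \<eta>_def by (rule Fis[OF Z])
    have \<eta>m[measurable]: "\<eta> \<in> borel_measurable G" using \<eta>is unfolding is_ess_inf_def by blast
    have \<eta>lb: "\<forall>X\<in>Acc. AE \<omega> in M. \<eta> \<omega> \<le> f Z X \<omega>" using \<eta>is unfolding is_ess_inf_def by blast
    define A where "A = {\<omega> \<in> space G. -\<infinity> < \<kappa> \<omega> \<and> \<kappa> \<omega> < \<eta> \<omega>}"
    have AG: "A \<in> sets G" unfolding A_def by measurable
    define \<alpha> where "\<alpha> = (\<lambda>\<omega>. if \<eta> \<omega> = \<infinity> then real_of_ereal (\<kappa> \<omega>) + 1
                         else (real_of_ereal (\<kappa> \<omega>) + real_of_ereal (\<eta> \<omega>)) / 2)"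
    have \<alpha>m[measurable]: "\<alpha> \<in> borel_measurable G" unfolding \<alpha>_def by measurable
    have \<alpha>L0: "\<alpha> \<in> L0 G" unfolding L0_def by simp
    have \<alpha>prop: "\<kappa> \<omega> < ereal (\<alpha> \<omega>) \<and> ereal (\<alpha> \<omega>) \<le> \<eta> \<omega>" if "\<omega> \<in> A" for \<omega>
    proof -
      have h: "-\<infinity> < \<kappa> \<omega>" "\<kappa> \<omega> < \<eta> \<omega>" using that unfolding A_def by auto
      then obtain k where k: "\<kappa> \<omega> = ereal k" by (cases "\<kappa> \<omega>") auto
      show ?thesis
      proof (cases "\<eta> \<omega> = \<infinity>")
        case True
        then show ?thesis unfolding \<alpha>_def using k by simp
      next
        case False
        then obtain e where e: "\<eta> \<omega> = ereal e" using h k by (cases "\<eta> \<omega>") auto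
        have "k < e" using h k e by simp
        then show ?thesis unfolding \<alpha>_def using k e by simp
      qed
    qed
    have hypA: "AE \<omega> in M. \<omega> \<in> A \<longrightarrow> K Ys Zs \<omega> < ereal (\<alpha> \<omega>)"
      using \<alpha>prop unfolding \<kappa>_def by auto
    have ex: "\<exists>S\<in>L0pp M G. \<exists>X\<in>LpG M G p.
          \<forall>Y\<in>L0 G. \<forall>Z\<in>Pq M G q.
            (AE \<omega> in M. \<omega> \<in> A \<longrightarrow> K Y Z \<omega> \<ge> ereal (\<alpha> \<omega>)) \<longrightarrow>
            (AE \<omega> in M. \<omega> \<in> A \<longrightarrow>
               Ys \<omega> * S \<omega> + real_cond_exp M G (\<lambda>x. X x * Zs x) \<omega>
                 < Y \<omega> * S \<omega> + real_cond_exp M G (\<lambda>x. X x * Z x) \<omega>)"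
      by (rule Kiv[rule_format, OF assms(5) Zs AG \<alpha>L0 hypA])
    obtain S where SL: "S \<in> L0pp M G" and ex2: "\<exists>X\<in>LpG M G p.
          \<forall>Y\<in>L0 G. \<forall>Z\<in>Pq M G q.
            (AE \<omega> in M. \<omega> \<in> A \<longrightarrow> K Y Z \<omega> \<ge> ereal (\<alpha> \<omega>)) \<longrightarrow>
            (AE \<omega> in M. \<omega> \<in> A \<longrightarrow>
               Ys \<omega> * S \<omega> + real_cond_exp M G (\<lambda>x. X x * Zs x) \<omega>
                 < Y \<omega> * S \<omega> + real_cond_exp M G (\<lambda>x. X x * Z x) \<omega>)"
      using ex by (rule bexE)
    obtain X where XL: "X \<in> LpG M G p" and HP:
      "\<forall>Y\<in>L0 G. \<forall>Z\<in>Pq M G q.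
            (AE \<omega> in M. \<omega> \<in> A \<longrightarrow> K Y Z \<omega> \<ge> ereal (\<alpha> \<omega>)) \<longrightarrow>
            (AE \<omega> in M. \<omega> \<in> A \<longrightarrow>
               Ys \<omega> * S \<omega> + real_cond_exp M G (\<lambda>x. X x * Zs x) \<omega>
                 < Y \<omega> * S \<omega> + real_cond_exp M G (\<lambda>x. X x * Z x) \<omega>)"
      using ex2 by (rule bexE)
    have Sm[measurable]: "S \<in> borel_measurable G" and Spos: "AE \<omega> in M. S \<omega> > 0"
      using SL unfolding L0pp_def L0_def by auto
    have Xm[measurable]: "X \<in> borel_measurable M" using XL unfolding LpG_def by auto
    define EXZs where "EXZs = real_cond_exp M G (\<lambda>x. X x * Zs x)"
    have EXZsm[measurable]: "EXZs \<in> borel_measurable G" unfolding EXZs_def by simp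
    define c where "c = (\<lambda>x. - Ys x - EXZs x / S x)"
    have cm[measurable]: "c \<in> borel_measurable G" unfolding c_def by measurable
    have Sm2[measurable]: "S \<in> borel_measurable M" by (rule measurable_from_subalg[OF sub Sm])
    have cm2[measurable]: "c \<in> borel_measurable M" by (rule measurable_from_subalg[OF sub cm])
    define \<xi> where "\<xi> = (\<lambda>x. (1 / S x) * X x + c x)"
    have \<xi>L: "\<xi> \<in> LpG M G p" unfolding \<xi>_def
      by (rule Lp_affine[OF P sub p1 XL]) measurable
    have \<xi>m[measurable]: "\<xi> \<in> borel_measurable M" using \<xi>L unfolding LpG_def by auto
    have key: "AE x in M. real_cond_exp M G (\<lambda>x. - \<xi> x * W x) x
                = - (1 / S x) * real_cond_exp M G (\<lambda>x. X x * W x) x - c x"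
      if W: "W \<in> Pq M G q" for W
    proof -
      have WL: "W \<in> LpG M G (conj_exp p)" using W unfolding Pq_def q_def by auto
      have Wm[measurable]: "W \<in> borel_measurable M" and W1: "AE x in M. real_cond_exp M G W x = 1"
        and Wf: "AE x in M. nn_cond_exp M G (\<lambda>x. ennreal \<bar>W x\<bar>) x \<noteq> \<infinity>"
        using Pq_facts[OF P sub W] by auto
      have eq: "(\<lambda>x. - \<xi> x * W x) = (\<lambda>x. (- (1 / S x)) * (X x * W x) + (- c x) * W x)"
        by (rule ext) (simp add: \<xi>_def algebra_simps)
      have XWf: "AE x in M. nn_cond_exp M G (\<lambda>x. ennreal \<bar>X x * W x\<bar>) x \<noteq> \<infinity>"
        by (rule cint_prod[OF P sub p1 XL WL])
      have f1: "AE x in M. nn_cond_exp M G (\<lambda>x. ennreal \<bar>(- (1 / S x)) * (X x * W x)\<bar>) x \<noteq> \<infinity>"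
        by (rule cint_mult[OF _ _ XWf]) measurable
      have f2: "AE x in M. nn_cond_exp M G (\<lambda>x. ennreal \<bar>(- c x) * W x\<bar>) x \<noteq> \<infinity>"
        by (rule cint_mult[OF _ _ Wf]) measurable
      have a1: "AE x in M. real_cond_exp M G (\<lambda>x. (- (1 / S x)) * (X x * W x) + (- c x) * W x) x
         = real_cond_exp M G (\<lambda>x. (- (1 / S x)) * (X x * W x)) x + real_cond_exp M G (\<lambda>x. (- c x) * W x) x"
        by (rule rce_add[where f="\<lambda>x. (- (1 / S x)) * (X x * W x)" and g="\<lambda>x. (- c x) * W x", OF _ _ f1 f2]) measurable
      have a2: "AE x in M. real_cond_exp M G (\<lambda>x. (- (1 / S x)) * (X x * W x)) x
         = (- (1 / S x)) * real_cond_exp M G (\<lambda>x. X x * W x) x"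
        by (rule rce_mult) measurable
      have a3: "AE x in M. real_cond_exp M G (\<lambda>x. (- c x) * W x) x = (- c x) * real_cond_exp M G W x"
        by (rule rce_mult) measurable
      show ?thesis unfolding eq using a1 a2 a3 W1 by eventually_elim simp
    qed
    have c2: "AE x in M. real_cond_exp M G (\<lambda>x. - \<xi> x * Zs x) x = Ys x"
      using key[OF Zs] by eventually_elim (simp add: c_def EXZs_def)
    have \<xi>Acc: "\<xi> \<in> Acc" unfolding Acc_def acc_set_def using \<xi>L c2 by auto
    define Y where "Y = real_cond_exp M G (\<lambda>x. - \<xi> x * Z x)"
    have YL0: "Y \<in> L0 G" unfolding Y_def by (rule ceL0)
    have "AE \<omega> in M. \<eta> \<omega> \<le> K Y Z \<omega>" using bspec[OF \<eta>lb \<xi>Acc] unfolding f_def Y_def .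
    then have hA: "AE \<omega> in M. \<omega> \<in> A \<longrightarrow> K Y Z \<omega> \<ge> ereal (\<alpha> \<omega>)"
    proof eventually_elim
      case (elim \<omega>)
      show ?case
      proof (intro impI)
        assume "\<omega> \<in> A"
        then have "ereal (\<alpha> \<omega>) \<le> \<eta> \<omega>" using \<alpha>prop by blast
        then show "ereal (\<alpha> \<omega>) \<le> K Y Z \<omega>" using elim by (rule order_trans)
      qed
    qed
    have strict: "AE \<omega> in M. \<omega> \<in> A \<longrightarrow>
               Ys \<omega> * S \<omega> + real_cond_exp M G (\<lambda>x. X x * Zs x) \<omega>
                 < Y \<omega> * S \<omega> + real_cond_exp M G (\<lambda>x. X x * Z x) \<omega>"
      by (rule HP[rule_format, OF YL0 Z hA])
    have notA: "AE \<omega> in M. \<omega> \<notin> A"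
      using strict key[OF Z] Spos
    proof eventually_elim
      case (elim \<omega>)
      have "Y \<omega> * S \<omega> + real_cond_exp M G (\<lambda>x. X x * Z x) \<omega>
            = Ys \<omega> * S \<omega> + real_cond_exp M G (\<lambda>x. X x * Zs x) \<omega>"
        using elim(2,3) unfolding Y_def c_def EXZs_def by (simp add: field_simps)
      then show ?case using elim(1) by auto
    qed
    show "AE \<omega> in M. Fz Z \<omega> \<le> \<kappa> \<omega>"
      using notA \<kappa>fin AE_space
    proof eventually_elim
      case (elim \<omega>)
      show ?case
      proof (rule ccontr)
        assume "\<not> Fz Z \<omega> \<le> \<kappa> \<omega>"
        then have "\<kappa> \<omega> < \<eta> \<omega>" unfolding \<eta>_def by simp
        moreover have "\<omega> \<in> space G" using elim(3) spG by simp
        ultimately have "\<omega> \<in> A" using elim(2) unfolding A_def by auto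
        then show False using elim(1) by simp
      qed
    qed
  qed
  have sup: "is_ess_sup M G (Pq M G q) Fz \<kappa>"
    unfolding is_ess_sup_def using \<kappa>m upper least by blast
  show ?thesis using ess_sup_eq[OF sup] unfolding \<kappa>_def Fz_def f_def Acc_def q_def
    by (simp add: eq_commute)
qed

end
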